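(* Fix $0<C<1$ and consider all probability vectors $w=(w_1,\dots,w_k)$ (of any finite length $k$, with $w_i\ge0$ and $\sum_i w_i=1$) satisfying $\sum_i w_i^3=C$. Then the minimum of $\sum_i w_i^4$ over all such vectors is attained by a vector of the form $w_1=\dots=w_{m-1}\ge w_m>0$, where $m$ is the smallest possible length for which a vector of this form satisfies $\sum_i w_i^3=C$. *)

theory Defs
  imports Complex_Main
begin

definition prob_vec :: "real list \<Rightarrow> bool" where
  "prob_vec w \<longleftrightarrow> w \<noteq> [] \<and> (\<forall>x\<in>set w. 0 \<le> x) \<and> sum_list w = 1"

definition pow_sum :: "nat \<Rightarrow> real list \<Rightarrow> real" where
  "pow_sum p w = sum_list (map (\<lambda>x. x ^ p) w)"

definition step_form :: "real list \<Rightarrow> bool" where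
  "step_form w \<longleftrightarrow> w \<noteq> [] \<and>
     (\<forall>i < length w - 1. w ! i = w ! 0) \<and>
     w ! 0 \<ge> last w \<and> last w > 0"

end

theory Submission
  imports Defs "HOL-Analysis.Analysis"
begin


lemma p3_sym: "a^3+b^3+c^3 = (a+b+c)^3 - 3*(a+b+c)*(a*b+b*c+c*a) + 3*(a*b*c)" for a b c :: real
  by algebra
lemma p4_sym: "a^4+b^4+c^4 = (a+b+c)^4 - 4*(a+b+c)^2*(a*b+b*c+c*a) + 2*(a*b+b*c+c*a)^2 + 4*(a+b+c)*(a*b*c)" for a b c :: real
  by algebra

lemma vieta3:
  fixes r1 r2 r3 p q w :: real
  assumes "r1 < r2" "r2 < r3"
    and e1: "r1^3 - p*r1^2 + q*r1 - w = 0"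
    and e2: "r2^3 - p*r2^2 + q*r2 - w = 0"
    and e3: "r3^3 - p*r3^2 + q*r3 - w = 0"
  shows "r1+r2+r3 = p \<and> r1*r2+r2*r3+r3*r1 = q \<and> r1*r2*r3 = w"
proof -
  have "(r1 - r2) * (r1^2+r1*r2+r2^2 - p*(r1+r2) + q) = (r1^3 - p*r1^2 + q*r1 - w) - (r2^3 - p*r2^2 + q*r2 - w)"
    by algebra
  with e1 e2 assms(1) have h12: "r1^2+r1*r2+r2^2 - p*(r1+r2) + q = 0" by simp
  have "(r1 - r3) * (r1^2+r1*r3+r3^2 - p*(r1+r3) + q) = (r1^3 - p*r1^2 + q*r1 - w) - (r3^3 - p*r3^2 + q*r3 - w)"
    by algebra
  with e1 e3 assms have h13: "r1^2+r1*r3+r3^2 - p*(r1+r3) + q = 0" by simp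
  have "(r2 - r3) * (r1+r2+r3 - p) = (r1^2+r1*r2+r2^2 - p*(r1+r2) + q) - (r1^2+r1*r3+r3^2 - p*(r1+r3) + q)"
    by algebra
  with h12 h13 assms have hp: "r1+r2+r3 = p" by simp
  have hq: "r1*r2+r2*r3+r3*r1 = q"
  proof -
    have "q = p*(r1+r2) - (r1^2+r1*r2+r2^2)" using h12 by linarith
    also have "\<dots> = r1*r2+r2*r3+r3*r1" unfolding hp[symmetric] by algebra
    finally show ?thesis by simp
  qed
  have "w = r1^3 - p*r1^2 + q*r1" using e1 by linarith
  also have "\<dots> = r1*r2*r3" unfolding hp[symmetric] hq[symmetric] by algebra
  finally show ?thesis using hp hq by simp
qed

lemma triple_improve:
  fixes x y z :: real
  assumes xy: "x > y" and yz: "y \<ge> z" and z0: "z > 0"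
  shows "\<exists>a b c. a \<ge> 0 \<and> b \<ge> 0 \<and> c \<ge> 0 \<and> a+b+c = x+y+z \<and>
     a^3+b^3+c^3 = x^3+y^3+z^3 \<and> a^4+b^4+c^4 < x^4+y^4+z^4"
proof -
  define sS where "sS = x+y+z"
  define eE where "eE = x*y+y*z+z*x"
  define wW where "wW = x*y*z"
  define tb where "tb = (x+y)/2"
  define A where "A = ((x-y)^2/4)*(tb - z)"
  define Kc where "Kc = A/(sS - tb)"
  have y0: "y > 0" using yz z0 by linarith
  have x0: "x > 0" using xy y0 by linarith
  have s0: "sS > 0" using x0 y0 z0 sS_def by linarith
  have e0: "eE > 0" unfolding eE_def using x0 y0 z0 by (simp add: add_pos_pos)
  have w0: "wW > 0" unfolding wW_def using x0 y0 z0 by simp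
  have tbz: "tb - z > 0" unfolding tb_def using xy yz by (simp add: field_simps)
  have stb: "sS - tb > 0" unfolding tb_def sS_def using x0 y0 z0 by (simp add: field_simps)
  have A0: "A > 0" unfolding A_def using xy tbz by simp
  have K0: "Kc > 0" unfolding Kc_def using A0 stb by simp
  define dD where "dD = min (min (wW/(2* sS)) (Kc/2)) eE"
  have d0: "dD > 0" unfolding dD_def using w0 s0 K0 e0 by simp
  have de: "dD < 2*eE" unfolding dD_def using e0 by linarith
  have dw: "dD* sS < wW"
  proof -
    have "dD \<le> wW/(2* sS)" unfolding dD_def by linarith
    then have "dD* sS \<le> wW/2" using s0 by (simp add: field_simps)
    then show ?thesis using w0 by linarith
  qed
  have dK: "dD*(sS-tb) < ((x-y)^2/4)*(tb - z)"
  proof -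
    have "dD \<le> Kc/2" unfolding dD_def by linarith
    then have "dD < Kc" using K0 by linarith
    then have "dD*(sS-tb) < Kc*(sS-tb)" using stb by simp
    also have "Kc*(sS-tb) = ((x-y)^2/4)*(tb - z)" using stb unfolding Kc_def A_def[symmetric] by simp
    finally show ?thesis .
  qed
  define Q where "Q t = t^3 - sS*t^2 + (eE-dD)*t - (wW - dD* sS)" for t :: real
  have Qeq: "Q t = (t-x)*(t-y)*(t-z) + dD*(sS-t)" for t
    unfolding Q_def sS_def eE_def wW_def by algebra
  have cQ: "continuous_on A Q" for A unfolding Q_def by (intro continuous_intros)
  have Q0: "Q 0 < 0" unfolding Q_def using dw by simp
  have sy: "sS - y > 0" unfolding sS_def using x0 z0 by simp
  have Qy: "Q y > 0" unfolding Qeq using d0 sy by simp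
  have Qtb: "Q tb < 0"
  proof -
    have h1: "tb - x = -(x-y)/2" "tb - y = (x-y)/2" unfolding tb_def by (simp_all add: field_simps)
    have "(tb-x)*(tb-y)*(tb-z) = -((x-y)^2/4)*(tb-z)" by (simp only: h1) (simp add: power2_eq_square field_simps)
    then show ?thesis unfolding Qeq using dK by linarith
  qed
  have Qs: "Q sS > 0" unfolding Qeq sS_def using x0 y0 z0 by (simp add: add_pos_pos)
  have ytb: "y < tb" unfolding tb_def using xy by (simp add: field_simps)
  have tbs: "tb < sS" using stb by simp
  obtain r1 where r1: "0 \<le> r1" "r1 \<le> y" "Q r1 = 0"
    using IVT'[of Q 0 0 y] Q0 Qy y0 cQ by force
  obtain r2 where r2: "y \<le> r2" "r2 \<le> tb" "Q r2 = 0"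
    using IVT2'[of Q tb 0 y] Qtb Qy ytb cQ by force
  obtain r3 where r3: "tb \<le> r3" "r3 \<le> sS" "Q r3 = 0"
    using IVT'[of Q tb 0 sS] Qtb Qs tbs cQ by force
  have "r1 \<noteq> y" using r1 Qy by auto
  have "r2 \<noteq> y" "r2 \<noteq> tb" using r2 Qy Qtb by auto
  have "r3 \<noteq> tb" using r3 Qtb by auto
  have lt: "r1 < r2" "r2 < r3" using r1 r2 r3 \<open>r1 \<noteq> y\<close> \<open>r2 \<noteq> y\<close> \<open>r2 \<noteq> tb\<close> \<open>r3 \<noteq> tb\<close> by auto
  have V: "r1+r2+r3 = sS \<and> r1*r2+r2*r3+r3*r1 = eE - dD \<and> r1*r2*r3 = wW - dD* sS"
    using vieta3[OF lt, of sS "eE-dD" "wW - dD* sS"] r1(3) r2(3) r3(3) unfolding Q_def by simp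
  have V1: "r1+r2+r3 = sS" and V2: "r1*r2+r2*r3+r3*r1 = eE - dD" and V3: "r1*r2*r3 = wW - dD* sS"
    using V by auto
  have X3: "x^3+y^3+z^3 = sS^3 - 3* sS*eE + 3*wW" unfolding sS_def eE_def wW_def by (rule p3_sym)
  have X4: "x^4+y^4+z^4 = sS^4 - 4* sS^2*eE + 2*eE^2 + 4* sS*wW" unfolding sS_def eE_def wW_def by (rule p4_sym)
  have R3: "r1^3+r2^3+r3^3 = sS^3 - 3* sS*(eE-dD) + 3*(wW-dD* sS)"
    using p3_sym[of r1 r2 r3] unfolding V1 V2 V3 .
  have R4: "r1^4+r2^4+r3^4 = sS^4 - 4* sS^2*(eE-dD) + 2*(eE-dD)^2 + 4* sS*(wW-dD* sS)"
    using p4_sym[of r1 r2 r3] unfolding V1 V2 V3 .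
  have p3: "r1^3+r2^3+r3^3 = x^3+y^3+z^3" unfolding R3 X3 by (simp add: algebra_simps)
  have "r1^4+r2^4+r3^4 - (x^4+y^4+z^4) = 2*dD*(dD - 2*eE)"
    unfolding R4 X4 by (simp add: algebra_simps power2_eq_square)
  also have "\<dots> < 0" using d0 de by (simp add: mult_pos_neg)
  finally have "r1^4+r2^4+r3^4 < x^4+y^4+z^4" by simp
  moreover have "r2 \<ge> 0" "r3 \<ge> 0" using r1 lt by auto
  ultimately show ?thesis using r1(1) V p3 sS_def by blast
qed



definition feas :: "nat \<Rightarrow> real \<Rightarrow> (nat \<Rightarrow> real) set" where
  "feas n C = {f. (\<forall>i<n. 0 \<le> f i \<and> f i \<le> 1) \<and> (\<forall>i. n \<le> i \<longrightarrow> f i = 0) \<and>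
      (\<Sum>i<n. f i) = 1 \<and> (\<Sum>i<n. f i ^ 3) = C}"

lemma exists_min:
  assumes "f0 \<in> feas n C"
  shows "\<exists>u\<in>feas n C. \<forall>f\<in>feas n C. (\<Sum>i<n. u i ^ 4) \<le> (\<Sum>i<n. f i ^ 4)"
proof -
  define S where "S i = (if i < n then {0..1::real} else {0})" for i
  have cS: "compact (PiE UNIV S)"
  proof -
    have "compactin (product_topology (\<lambda>i. euclidean) UNIV) (PiE UNIV S)"
      unfolding compactin_PiE by (auto simp: S_def)
    then show ?thesis by (simp add: euclidean_product_topology)
  qed
  have c1: "continuous_on UNIV (\<lambda>f::nat\<Rightarrow>real. \<Sum>i<n. f i)"
    by (intro continuous_intros continuous_on_product_then_coordinatewise continuous_on_id)
  have c3: "continuous_on UNIV (\<lambda>f::nat\<Rightarrow>real. \<Sum>i<n. f i ^ 3)"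
    by (intro continuous_intros continuous_on_product_then_coordinatewise continuous_on_id)
  have c4: "continuous_on A (\<lambda>f::nat\<Rightarrow>real. \<Sum>i<n. f i ^ 4)" for A
    by (intro continuous_intros continuous_on_product_then_coordinatewise continuous_on_id)
  have eq: "feas n C = PiE UNIV S \<inter> {f. (\<Sum>i<n. f i) = 1} \<inter> {f. (\<Sum>i<n. f i ^ 3) = C}"
  proof -
    have m: "(\<forall>i. f i \<in> S i) \<longleftrightarrow> (\<forall>i<n. 0 \<le> f i \<and> f i \<le> 1) \<and> (\<forall>i. n \<le> i \<longrightarrow> f i = 0)" for f
    proof
      assume "\<forall>i. f i \<in> S i"
      then show "(\<forall>i<n. 0 \<le> f i \<and> f i \<le> 1) \<and> (\<forall>i. n \<le> i \<longrightarrow> f i = 0)"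
        unfolding S_def by (metis atLeastAtMost_iff not_less singletonD)
    next
      assume "(\<forall>i<n. 0 \<le> f i \<and> f i \<le> 1) \<and> (\<forall>i. n \<le> i \<longrightarrow> f i = 0)"
      then show "\<forall>i. f i \<in> S i" unfolding S_def by (simp add: not_less)
    qed
    show ?thesis unfolding feas_def PiE_UNIV_domain Pi_iff using m by blast
  qed
  have "compact (feas n C)" unfolding eq
    by (intro compact_Int_closed cS closed_Collect_eq c1 c3 continuous_on_const)
  then show ?thesis using continuous_attains_inf[OF _ _ c4] assms by blast
qed



lemma gmono:
  fixes j :: nat and A1 A2 B1 B2 :: real
  assumes h1: "real j*A1+B1 = 1" and h2: "real j*A2+B2 = 1" and "0 \<le> B2" "B1 \<le> A1" "A1 < A2" "j > 0"
  shows "real j*A1^3+B1^3 < real j*A2^3+B2^3"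
proof -
  have B1: "B1 = 1 - real j*A1" and B2: "B2 = 1 - real j*A2" using h1 h2 by linarith+
  have jp: "real j > 0" using assms by simp
  have "real j*A1 < real j*A2" using assms jp by simp
  then have "B2 < B1" using B1 B2 by linarith
  have diff: "real j*A2^3+B2^3 - (real j*A1^3+B1^3)
      = real j*(A2-A1)*((A2^2+A2*A1+A1^2) - (B2^2+B2*B1+B1^2))"
    unfolding B1 B2 by algebra
  have b1p: "B1 > 0" using \<open>B2 < B1\<close> assms by linarith
  have i1: "A2^2 > B1^2" using assms b1p by (intro power_strict_mono) auto
  have i2: "A2*A1 \<ge> B2*B1" using assms \<open>B2 < B1\<close> by (intro mult_mono) auto
  have i3: "A1^2 \<ge> B2^2" using assms \<open>B2 < B1\<close> by (intro power_mono) auto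
  have "(A2^2+A2*A1+A1^2) - (B2^2+B2*B1+B1^2) > 0"
  proof -
    have "B2^2 \<le> A1^2" using i3 .
    have "B2*B1 \<le> A2*A1" using i2 .
    then show ?thesis using i1 i3 by linarith
  qed
  moreover have "real j*(A2-A1) > 0" using jp assms by simp
  ultimately have "real j*(A2-A1)*((A2^2+A2*A1+A1^2) - (B2^2+B2*B1+B1^2)) > 0" by simp
  then show ?thesis using diff by linarith
qed

lemma gbounds:
  fixes j :: nat and A B :: real
  assumes h: "real j*A+B = 1" and "0 < B" "B \<le> A" "j > 0"
  shows "1/(real j+1)^2 \<le> real j*A^3+B^3" and "real j*A^3+B^3 < 1/(real j)^2"
proof -
  have jp: "real j > 0" using assms by simp
  define A0 where "A0 = 1/(real j+1)"
  have hA0: "real j*A0+A0 = 1" unfolding A0_def by (simp add: field_simps)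
  have g0: "real j*A0^3+A0^3 = 1/(real j+1)^2"
  proof -
    have "real j*A0^3+A0^3 = A0^2 * (real j*A0+A0)" by (simp add: algebra_simps power3_eq_cube power2_eq_square)
    also have "\<dots> = A0^2" using hA0 by simp
    also have "\<dots> = 1/(real j+1)^2" unfolding A0_def by (simp add: power_one_over)
    finally show ?thesis .
  qed
  have "A0 \<le> A"
  proof -
    have "(real j + 1)*A \<ge> 1" using h assms by (simp add: algebra_simps)
    then show ?thesis unfolding A0_def by (simp add: field_simps)
  qed
  show "1/(real j+1)^2 \<le> real j*A^3+B^3"
  proof (cases "A0 = A")
    case True
    then have "real j*A0 + B = 1" using h by simp
    then have "B = A0" using hA0 by linarith
    then show ?thesis using g0 True by simp
  next
    case False
    then have "A0 < A" using \<open>A0 \<le> A\<close> by simp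
    from gmono[OF hA0 h _ _ this \<open>j>0\<close>] assms g0 show ?thesis by simp
  qed
  define A1 where "A1 = 1/real j"
  have hA1: "real j*A1+0 = 1" unfolding A1_def using jp by simp
  have g1: "real j*A1^3+0^3 = 1/(real j)^2"
    unfolding A1_def using jp by (simp add: field_simps power3_eq_cube power2_eq_square)
  have "A < A1"
  proof -
    have "real j*A < 1" using h assms by simp
    then show ?thesis unfolding A1_def using jp by (simp add: field_simps)
  qed
  from gmono[OF h hA1 _ _ this \<open>j>0\<close>] assms g1 show "real j*A^3+B^3 < 1/(real j)^2" by simp
qed

lemma param_unique:
  fixes j1 j2 :: nat and A1 A2 B1 B2 :: real
  assumes h1: "real j1*A1+B1 = 1" "0 < B1" "B1 \<le> A1"
    and h2: "real j2*A2+B2 = 1" "0 < B2" "B2 \<le> A2"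
    and eq: "real j1*A1^3+B1^3 = real j2*A2^3+B2^3"
  shows "j1 = j2 \<and> real j1*A1^4+B1^4 = real j2*A2^4+B2^4"
proof -
  have one: "real j*A^3+B^3 < 1" if "real j*A+B = 1" "0 < B" "B \<le> A" "j > 0" for j A B
  proof -
    have "real j*A^3+B^3 < 1/(real j)^2" using gbounds(2)[OF that] .
    also have "1/(real j)^2 \<le> 1" using that(4) by (simp add: field_simps)
    finally show ?thesis .
  qed
  have cmp: "False" if "j < k" "real j*A+B = 1" "0 < B" "B \<le> A"
      "real k*A'+B' = 1" "0 < B'" "B' \<le> A'" "real j*A^3+B^3 = real k*A'^3+B'^3" for j k A B A' B'
  proof (cases "j = 0")
    case True
    then have "B = 1" using that by simp
    then have "real j*A^3+B^3 = 1" using True by simp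
    moreover have "real k*A'^3+B'^3 < 1" using one[OF that(5-7)] that(1) by simp
    ultimately show False using that(8) by simp
  next
    case False
    have "1/(real j+1)^2 \<le> real j*A^3+B^3" using gbounds(1)[OF that(2-4)] False by simp
    moreover have "real k*A'^3+B'^3 < 1/(real k)^2" using gbounds(2)[OF that(5-7)] that(1) by simp
    moreover have "1/(real k)^2 \<le> 1/(real j+1)^2"
    proof -
      have "real j + 1 \<le> real k" using that(1) by simp
      then have "(real j+1)^2 \<le> (real k)^2" by (intro power_mono) auto
      then show ?thesis by (intro divide_left_mono) auto
    qed
    ultimately show False using that(8) by linarith
  qed
  have jj: "j1 = j2"
  proof (rule ccontr)
    assume "j1 \<noteq> j2"
    then consider "j1 < j2" | "j2 < j1" by linarith
    then show False
    proof cases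
      case 1 then show False using cmp[OF 1 h1 h2 eq] by blast
    next
      case 2 then show False using cmp[OF 2 h2 h1 eq[symmetric]] by blast
    qed
  qed
  show ?thesis
  proof (cases "j1 = 0")
    case True
    then show ?thesis using jj h1 h2 by simp
  next
    case False
    have "A1 = A2"
    proof (rule ccontr)
      assume "A1 \<noteq> A2"
      then consider "A1 < A2" | "A2 < A1" by linarith
      then show False
      proof cases
        case 1
        have "real j1*A1^3+B1^3 < real j1*A2^3+B2^3"
          using gmono[OF h1(1), of A2 B2] h2 jj 1 h1 False by simp
        then show False using eq jj by simp
      next
        case 2
        have "real j1*A2^3+B2^3 < real j1*A1^3+B1^3"
          using gmono[of j1 A2 B2 A1 B1] h2 jj 2 h1 False by simp
        then show False using eq jj by simp
      qed
    qed
    moreover have "B1 = B2" using h1 h2 jj \<open>A1 = A2\<close> by simp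
    ultimately show ?thesis using jj by simp
  qed
qed

lemma sf_params:
  assumes "step_form v"
  shows "pow_sum p v = real (length v - 1) * (v!0)^p + (last v)^p"
    and "sum_list v = real (length v - 1) * (v!0) + last v"
proof -
  have ne: "v \<noteq> []" using assms unfolding step_form_def by simp
  have bl: "butlast v = replicate (length v - 1) (v!0)"
  proof (rule replicate_eqI)
    show "length (butlast v) = length v - 1" by simp
    fix y assume "y \<in> set (butlast v)"
    then obtain i where "i < length (butlast v)" "y = butlast v ! i" by (metis in_set_conv_nth)
    note hi = this
    have hall: "\<forall>i < length v - 1. v ! i = v ! 0" using assms unfolding step_form_def by blast
    have "butlast v ! i = v ! i" using hi(1) by (rule nth_butlast)
    moreover have "i < length v - 1" using hi(1) by simp
    ultimately show "y = v!0" using hi(2) hall by metis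
  qed
  define k where "k = length v - 1"
  define a where "a = v!0"
  define b where "b = last v"
  have v: "v = replicate k a @ [b]"
    using append_butlast_last_id[OF ne] bl unfolding k_def a_def b_def by metis
  have "pow_sum p (replicate k a @ [b]) = real k * a^p + b^p" by (simp add: pow_sum_def sum_list_replicate)
  then show "pow_sum p v = real (length v - 1) * (v!0)^p + (last v)^p"
    using v unfolding k_def a_def b_def by metis
  have "sum_list (replicate k a @ [b]) = real k * a + b" by (simp add: sum_list_replicate)
  then show "sum_list v = real (length v - 1) * (v!0) + last v"
    using v unfolding k_def a_def b_def by metis
qed


lemma sum_upd3:
  fixes g :: "real \<Rightarrow> real" and I :: "nat set" and f :: "nat \<Rightarrow> real"
  assumes "finite I" "i0\<in>I" "i1\<in>I" "i2\<in>I" "i0\<noteq>i1" "i0\<noteq>i2" "i1\<noteq>i2"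
  shows "(\<Sum>i\<in>I. g ((f(i0:=a, i1:=b, i2:=c)) i)) = (\<Sum>i\<in>I. g (f i)) - g (f i0) - g (f i1) - g (f i2) + g a + g b + g c"
proof -
  have sub: "{i0,i1,i2} \<subseteq> I" using assms by auto
  have split: "(\<Sum>i\<in>I. h i) = (\<Sum>i\<in>I - {i0,i1,i2}. h i) + (\<Sum>i\<in>{i0,i1,i2}. h i)" for h :: "nat \<Rightarrow> real"
    using sum.subset_diff[OF sub assms(1)] .
  have rest: "(\<Sum>i\<in>I - {i0,i1,i2}. g ((f(i0:=a, i1:=b, i2:=c)) i)) = (\<Sum>i\<in>I - {i0,i1,i2}. g (f i))"
    by (rule sum.cong) auto
  have t1: "(\<Sum>i\<in>{i0,i1,i2}. g ((f(i0:=a, i1:=b, i2:=c)) i)) = g a + g b + g c"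
    using assms(5-7) by simp
  have t2: "(\<Sum>i\<in>{i0,i1,i2}. g (f i)) = g (f i0) + g (f i1) + g (f i2)"
    using assms(5-7) by simp
  show ?thesis using split[of "\<lambda>i. g ((f(i0:=a, i1:=b, i2:=c)) i)"] split[of "\<lambda>i. g (f i)"] rest t1 t2
    by linarith
qed

lemma min_structure:
  assumes uF: "u \<in> feas n C" and umin: "\<forall>f\<in>feas n C. (\<Sum>i<n. u i ^ 4) \<le> (\<Sum>i<n. f i ^ 4)"
    and n0: "n > 0"
  shows "\<exists>j A B. real j*A+B = 1 \<and> 0 < B \<and> B \<le> A \<and> real j*A^3+B^3 = C \<and> real j*A^4+B^4 = (\<Sum>i<n. u i^4)"
proof -
  have hu: "\<forall>i<n. 0 \<le> u i \<and> u i \<le> 1" and hz: "\<forall>i. n \<le> i \<longrightarrow> u i = 0"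
    and s1: "(\<Sum>i<n. u i) = 1" and s3: "(\<Sum>i<n. u i ^ 3) = C"
    using uF unfolding feas_def by auto
  define M where "M = Max (u ` {..<n})"
  have fin: "finite (u ` {..<n})" by simp
  have nemp: "u ` {..<n} \<noteq> {}" using n0 by auto
  have Mge: "u i \<le> M" if "i < n" for i unfolding M_def using fin that by (intro Max_ge) auto
  obtain i0 where i0: "i0 < n" "u i0 = M" using Max_in[OF fin nemp] unfolding M_def by auto
  have M0: "M > 0"
  proof (rule ccontr)
    assume "\<not> M > 0"
    then have "(\<Sum>i<n. u i) \<le> 0" using Mge by (intro sum_nonpos) (smt (verit) lessThan_iff)
    then show False using s1 by simp
  qed
  have notwo: False if i12: "i1 < n" "i2 < n" "i1 \<noteq> i2" "0 < u i2" "u i2 \<le> u i1" "u i1 < M" for i1 i2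
  proof -
    have d01: "i0 \<noteq> i1" using i0 i12 by auto
    have d02: "i0 \<noteq> i2" using i0 i12 by auto
    obtain a b c where abc: "a \<ge> 0" "b \<ge> 0" "c \<ge> 0" "a+b+c = M + u i1 + u i2"
      "a^3+b^3+c^3 = M^3 + u i1^3 + u i2^3" "a^4+b^4+c^4 < M^4 + u i1^4 + u i2^4"
      using triple_improve[of "u i1" M "u i2"] i12 by blast
    define f' where "f' = u(i0:=a, i1:=b, i2:=c)"
    have I: "finite {..<n}" "i0 \<in> {..<n}" "i1 \<in> {..<n}" "i2 \<in> {..<n}" using i0 i12 by auto
    have S: "(\<Sum>i<n. g (f' i)) = (\<Sum>i<n. g (u i)) - g M - g (u i1) - g (u i2) + g a + g b + g c" for g :: "real \<Rightarrow> real"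
      unfolding f'_def using sum_upd3[OF I d01 d02 i12(3), of g u a b c] i0 by simp
    have le3: "M + u i1 + u i2 \<le> 1"
    proof -
      have "(\<Sum>i\<in>{i0,i1,i2}. u i) \<le> (\<Sum>i<n. u i)"
        using I hu by (intro sum_mono2) auto
      moreover have "(\<Sum>i\<in>{i0,i1,i2}. u i) = M + u i1 + u i2" using d01 d02 i12(3) i0 by simp
      ultimately show ?thesis using s1 by simp
    qed
    have f'F: "f' \<in> feas n C"
    proof -
      have "\<forall>i<n. 0 \<le> f' i \<and> f' i \<le> 1"
        using hu abc le3 unfolding f'_def by (auto simp: fun_upd_def)
      moreover have "\<forall>i. n \<le> i \<longrightarrow> f' i = 0" using hz i0 i12 unfolding f'_def by auto
      moreover have "(\<Sum>i<n. f' i) = 1" using S[of "\<lambda>x. x"] s1 abc by simp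
      moreover have "(\<Sum>i<n. f' i ^ 3) = C" using S[of "\<lambda>x. x^3"] s3 abc by simp
      ultimately show ?thesis unfolding feas_def by blast
    qed
    have "(\<Sum>i<n. f' i ^ 4) < (\<Sum>i<n. u i ^ 4)" using S[of "\<lambda>x. x^4"] abc by simp
    then show False using umin f'F by fastforce
  qed
  define T where "T = {i\<in>{..<n}. u i = M}"
  define R where "R = {i\<in>{..<n}. 0 < u i \<and> u i < M}"
  have Runiq: "r1 = r2" if "r1 \<in> R" "r2 \<in> R" for r1 r2
  proof (rule ccontr)
    assume ne: "r1 \<noteq> r2"
    show False
    proof (cases "u r2 \<le> u r1")
      case True
      then show False using notwo[of r1 r2] that ne unfolding R_def by auto
    next
      case False
      then show False using notwo[of r2 r1] that ne unfolding R_def by auto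
    qed
  qed
  have dec: "(\<Sum>i<n. u i ^ p) = real (card T) * M ^ p + (\<Sum>i\<in>R. u i ^ p)" if "p > 0" for p :: nat
  proof -
    have "(\<Sum>i<n. u i ^ p) = (\<Sum>i<n. (if u i = M then M ^ p else 0) + (if 0 < u i \<and> u i < M then u i ^ p else 0))"
    proof (rule sum.cong)
      fix i assume "i \<in> {..<n}"
      then have "0 \<le> u i" "u i \<le> M" using hu Mge by auto
      then show "u i ^ p = (if u i = M then M ^ p else 0) + (if 0 < u i \<and> u i < M then u i ^ p else 0)"
        using that by auto
    qed simp
    also have "\<dots> = (\<Sum>i<n. (if u i = M then M ^ p else 0)) + (\<Sum>i<n. (if 0 < u i \<and> u i < M then u i ^ p else 0))"
      by (rule sum.distrib)
    also have "(\<Sum>i<n. (if u i = M then M ^ p else 0)) = (\<Sum>i\<in>T. M ^ p)"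
      unfolding T_def by (rule sum.inter_filter[symmetric]) simp
    also have "(\<Sum>i<n. (if 0 < u i \<and> u i < M then u i ^ p else 0)) = (\<Sum>i\<in>R. u i ^ p)"
      unfolding R_def by (rule sum.inter_filter[symmetric]) simp
    finally show ?thesis by simp
  qed
  have cT: "card T \<ge> 1"
  proof -
    have "i0 \<in> T" using i0 unfolding T_def by simp
    moreover have "finite T" unfolding T_def by simp
    ultimately show ?thesis by (metis One_nat_def Suc_leI card_gt_0_iff empty_iff)
  qed
  have d1: "(\<Sum>i<n. u i) = real (card T) * M + (\<Sum>i\<in>R. u i)" using dec[of 1] by simp
  have d3: "(\<Sum>i<n. u i^3) = real (card T) * M^3 + (\<Sum>i\<in>R. u i^3)" using dec[of 3] by simp
  have d4: "(\<Sum>i<n. u i^4) = real (card T) * M^4 + (\<Sum>i\<in>R. u i^4)" using dec[of 4] by simp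
  show ?thesis
  proof (cases "R = {}")
    case True
    have rT: "real (card T - 1) = real (card T) - 1" using cT by (simp add: of_nat_diff)
    show ?thesis
    proof (intro exI conjI)
      show "real (card T - 1) * M + M = 1" using d1 s1 True rT by (simp add: algebra_simps)
      show "real (card T - 1) * M^3 + M^3 = C" using d3 s3 True rT by (simp add: algebra_simps)
      show "real (card T - 1) * M^4 + M^4 = (\<Sum>i<n. u i^4)" using d4 True rT by (simp add: algebra_simps)
    qed (use M0 in auto)
  next
    case False
    then obtain r where r: "r \<in> R" by auto
    then have Rr: "R = {r}" using Runiq by auto
    have "0 < u r" "u r < M" using r unfolding R_def by auto
    show ?thesis
    proof (intro exI conjI)
      show "real (card T) * M + u r = 1" using d1 s1 Rr by simp
      show "real (card T) * M^3 + u r^3 = C" using d3 s3 Rr by simp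
      show "real (card T) * M^4 + u r^4 = (\<Sum>i<n. u i^4)" using d4 Rr by simp
    qed (use \<open>0 < u r\<close> \<open>u r < M\<close> in auto)
  qed
qed

lemma pow_sum_nth: "pow_sum p v = (\<Sum>i<length v. (v!i)^p)"
  unfolding pow_sum_def by (simp add: sum_list_sum_nth atLeast0LessThan)

theorem lemma2p7:
  fixes C :: real
  assumes "0 < C" and "C < 1"
  shows "\<exists>w. prob_vec w \<and> step_form w \<and> pow_sum 3 w = C
           \<and> (\<forall>v. prob_vec v \<and> step_form v \<and> pow_sum 3 v = C \<longrightarrow> length w \<le> length v)
           \<and> (\<forall>v. prob_vec v \<and> pow_sum 3 v = C \<longrightarrow> pow_sum 4 w \<le> pow_sum 4 v)"
proof -
  obtain m0 :: nat where m0: "1/C < real m0" using reals_Archimedean2 by blast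
  have ex: "\<exists>m::nat. 1 \<le> real m ^ 2 * C"
  proof (intro exI)
    have "real m0 \<ge> 1"
    proof -
      have "1/C > 1" using assms by (simp add: field_simps)
      then show ?thesis using m0 by linarith
    qed
    then have "real m0 \<le> real m0 ^ 2" by (simp add: power2_eq_square)
    moreover have "1 < real m0 * C" using m0 assms by (simp add: field_simps)
    ultimately show "1 \<le> real m0 ^ 2 * C" using assms
      by (smt (verit, best) mult_right_mono)
  qed
  define m where "m = (LEAST m::nat. 1 \<le> real m ^ 2 * C)"
  have hm: "1 \<le> real m ^ 2 * C" unfolding m_def by (rule LeastI_ex[OF ex])
  have m2: "m \<ge> 2"
  proof -
    have "m \<noteq> 0"
    proof
      assume "m = 0"
      with hm show False by simp
    qed
    moreover have "m \<noteq> 1" using hm assms by auto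
    ultimately show ?thesis by linarith
  qed
  define j where "j = m - 1"
  have jm: "real m = real j + 1" unfolding j_def using m2 by (simp add: of_nat_diff)
  have j1: "j \<ge> 1" unfolding j_def using m2 by simp
  have jp: "real j > 0" using j1 by simp
  have hj: "\<not> (1 \<le> real j ^ 2 * C)" unfolding m_def j_def
    by (rule not_less_Least) (use m2 m_def in simp)
  define g where "g a = real j * a^3 + (1 - real j*a)^3" for a
  define alo where "alo = 1/(real j + 1)"
  define ahi where "ahi = 1/real j"
  have alo1: "1 - real j*alo = alo" unfolding alo_def by (simp add: field_simps)
  have ahi1: "1 - real j*ahi = 0" unfolding ahi_def using jp by simp
  have galo: "g alo = alo^2"
  proof -
    have "g alo = alo^2 * (real j*alo+alo)" unfolding g_def alo1 by (simp add: algebra_simps power3_eq_cube power2_eq_square)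
    also have "real j*alo+alo = 1" using alo1 by linarith
    finally show ?thesis by simp
  qed
  have gahi: "g ahi = ahi^2"
  proof -
    have "g ahi = ahi^2 * (real j*ahi)" unfolding g_def ahi1 by (simp add: algebra_simps power3_eq_cube power2_eq_square)
    also have "real j*ahi = 1" using ahi1 by linarith
    finally show ?thesis by simp
  qed
  have Clo: "g alo \<le> C"
  proof -
    have "alo^2 = 1/(real m)^2" unfolding alo_def jm by (simp add: power_one_over)
    also have "\<dots> \<le> C" using hm m2 by (simp add: field_simps)
    finally show ?thesis using galo by simp
  qed
  have Chi: "C < g ahi"
  proof -
    have "real j ^ 2 * C < 1" using hj by simp
    then have "C < 1/(real j)^2" using jp by (simp add: field_simps)
    also have "1/(real j)^2 = ahi^2" unfolding ahi_def by (simp add: power_one_over)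
    finally show ?thesis using gahi by simp
  qed
  have alohi: "alo \<le> ahi" unfolding alo_def ahi_def using jp by (simp add: frac_le)
  have cg: "continuous_on {alo..ahi} g" unfolding g_def by (intro continuous_intros)
  obtain a where a: "alo \<le> a" "a \<le> ahi" "g a = C"
    using IVT'[of g alo C ahi, OF Clo _ alohi cg] Chi by auto
  have "a \<noteq> ahi" using a Chi by auto
  then have aahi: "a < ahi" using a by simp
  define b where "b = 1 - real j*a"
  have b0: "b > 0"
  proof -
    have "real j*a < real j*ahi" using aahi jp by simp
    then show ?thesis unfolding b_def using ahi1 by linarith
  qed
  have ba: "b \<le> a"
  proof -
    have "real j*alo \<le> real j*a" using a jp by simp
    then show ?thesis unfolding b_def using alo1 a by linarith
  qed
  have jab: "real j*a+b = 1" unfolding b_def by simp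
  have g3: "real j*a^3+b^3 = C" using a(3) unfolding g_def b_def by simp
  define w where "w = replicate j a @ [b]"
  have psw: "pow_sum p w = real j * a^p + b^p" for p unfolding w_def pow_sum_def by (simp add: sum_list_replicate)
  have slw: "sum_list w = 1" unfolding w_def using jab by (simp add: sum_list_replicate)
  have lw: "length w = j + 1" unfolding w_def by simp
  have a0: "a > 0" using b0 ba by linarith
  have pw: "prob_vec w" unfolding prob_vec_def using slw a0 b0 by (auto simp: w_def)
  have w0: "w ! 0 = a" unfolding w_def using j1 by (simp add: nth_append)
  have sw: "step_form w"
    unfolding step_form_def
  proof (intro conjI allI impI)
    show "w \<noteq> []" unfolding w_def by simp
    fix i assume "i < length w - 1"
    then have "i < j" using lw by simp
    then show "w ! i = w ! 0" unfolding w0 unfolding w_def by (simp add: nth_append)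
  next
    show "last w \<le> w ! 0" unfolding w0 using ba by (simp add: w_def)
    show "0 < last w" using b0 by (simp add: w_def)
  qed
  have p3w: "pow_sum 3 w = C" using psw[of 3] g3 by simp
  have uniq: "length v - 1 = j \<and> real (length v - 1)*(v!0)^4 + (last v)^4 = real j*a^4+b^4"
    if "step_form v" "prob_vec v" "pow_sum 3 v = C" for v
  proof -
    have "sum_list v = 1" using that unfolding prob_vec_def by simp
    then have h1: "real (length v - 1) * (v!0) + last v = 1" using sf_params(2)[OF that(1)] by simp
    have h3: "real (length v - 1) * (v!0)^3 + (last v)^3 = C" using sf_params(1)[OF that(1), of 3] that(3) by simp
    have l0: "0 < last v" "last v \<le> v!0" using that(1) unfolding step_form_def by auto
    show ?thesis by (rule param_unique[OF h1 l0 jab b0 ba]) (simp only: h3 g3)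
  qed
  show ?thesis
  proof (intro exI conjI allI impI)
    show "prob_vec w" by (rule pw)
    show "step_form w" by (rule sw)
    show "pow_sum 3 w = C" by (rule p3w)
  next
    fix v assume hv: "prob_vec v \<and> step_form v \<and> pow_sum 3 v = C"
    then have "length v - 1 = j" using uniq by blast
    moreover have "v \<noteq> []" using hv unfolding prob_vec_def by simp
    ultimately show "length w \<le> length v" using lw by (cases v) auto
  next
    fix v assume hv: "prob_vec v \<and> pow_sum 3 v = C"
    define n where "n = length v"
    have n0: "n > 0" using hv unfolding prob_vec_def n_def by simp
    have vnn: "\<forall>x\<in>set v. 0 \<le> x" and sv1: "sum_list v = 1" using hv unfolding prob_vec_def by auto
    define f0 where "f0 i = (if i < n then v!i else 0)" for i
    have f0s: "(\<Sum>i<n. f0 i ^ p) = pow_sum p v" for p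
      unfolding pow_sum_nth n_def[symmetric] f0_def by (rule sum.cong) auto
    have f0F: "f0 \<in> feas n C"
    proof -
      have "\<forall>i<n. 0 \<le> f0 i \<and> f0 i \<le> 1"
      proof (intro allI impI)
        fix i assume "i < n"
        then have "v!i \<in> set v" unfolding n_def by simp
        then have "0 \<le> v!i" "v!i \<le> sum_list v" using vnn by (auto intro: member_le_sum_list)
        then show "0 \<le> f0 i \<and> f0 i \<le> 1" using sv1 \<open>i<n\<close> unfolding f0_def by simp
      qed
      moreover have "\<forall>i. n \<le> i \<longrightarrow> f0 i = 0" unfolding f0_def by simp
      moreover have "(\<Sum>i<n. f0 i) = 1"
      proof -
        have "(\<Sum>i<n. f0 i) = (\<Sum>i<n. f0 i ^ 1)" by simp
        also have "\<dots> = pow_sum 1 v" by (rule f0s)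
        also have "\<dots> = 1" using sv1 unfolding pow_sum_def by simp
        finally show ?thesis .
      qed
      moreover have "(\<Sum>i<n. f0 i ^ 3) = C" using f0s[of 3] hv by simp
      ultimately show ?thesis unfolding feas_def by blast
    qed
    obtain u where uF: "u \<in> feas n C" and umin: "\<forall>f\<in>feas n C. (\<Sum>i<n. u i ^ 4) \<le> (\<Sum>i<n. f i ^ 4)"
      using exists_min[OF f0F] by blast
    obtain j' A B where jAB: "real j'*A+B = 1" "0 < B" "B \<le> A" "real j'*A^3+B^3 = C"
      "real j'*A^4+B^4 = (\<Sum>i<n. u i^4)"
      using min_structure[OF uF umin n0] by blast
    have "j' = j \<and> real j'*A^4+B^4 = real j*a^4+b^4"
      by (rule param_unique[OF jAB(1-3) jab b0 ba]) (simp only: jAB(4) g3)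
    then have "pow_sum 4 w = (\<Sum>i<n. u i^4)" using psw[of 4] jAB(5) by simp
    also have "\<dots> \<le> (\<Sum>i<n. f0 i^4)" using umin f0F by blast
    also have "\<dots> = pow_sum 4 v" by (rule f0s)
    finally show "pow_sum 4 w \<le> pow_sum 4 v" .
  qed
qed

end
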